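(* Let $A:\mathbb{R}\to M_{n\times n}(\mathbb{R})$ and $P:\mathbb{R}\to M_{n\times n}(\mathbb{R})$ be continuous. Suppose the linear system $\dot x=A(t)x$ has non-uniform bounded growth with constants $K_0>0$, $a>0$, $\varepsilon>0$, i.e. $\|\Phi_A(t,\tau)\|\le K_0e^{\varepsilon|\tau|}e^{a|t-\tau|}$ for all $t,\tau\in\mathbb{R}$. Assume there exist $\mathcal{P}>0$ and $p>0$ such that $\|P(t)\|\le \mathcal{P}e^{-p|t|}$ for all $t\in\mathbb{R}$, and that $p>\varepsilon$. Then the perturbed system $\dot x=(A(t)+P(t))x$ has non-uniform bounded growth with constants $K_0$, $a+K_0\mathcal{P}$ and $\varepsilon$, i.e. its transition matrix $\tilde\Phi$ satisfies $\|\tilde\Phi(t_2,t_1)\|\le K_0e^{(a+K_0\mathcal{P})|t_2-t_1|+\varepsilon|t_1|}$ for all $t_1,t_2\in\mathbb{R}$.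
   Context: For a continuous matrix function $V:\mathbb{R}\to M_{n\times n}(\mathbb{R})$, $\Phi_V(t,s)$ denotes the transition matrix of $\dot x=V(t)x$ (so $x(t)=\Phi_V(t,s)x(s)$). The system $\dot x=V(t)x$ has non-uniform bounded growth on $\mathbb{R}$ with constants $K_0>0$, $a>0$, $\eta>0$ if $\|\Phi_V(t,\tau)\|\le K_0e^{\eta|\tau|}e^{a|t-\tau|}$ for all $t,\tau\in\mathbb{R}$. $\|\cdot\|$ is the Euclidean operator norm. *)

theory Defs
  imports "HOL-Analysis.Analysis"
begin

definition opnorm :: "real^'n^'n \<Rightarrow> real" where
  "opnorm M = onorm (\<lambda>x. M *v x)"

text \<open>Phi is the transition matrix of x' = V(t) x:
  Phi(s,s) = I and t \<mapsto> Phi(t,s) solves the matrix equation X' = V(t) X.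
  (For continuous V this determines Phi uniquely.)\<close>
definition is_transition_matrix ::
  "(real \<Rightarrow> real^'n^'n) \<Rightarrow> (real \<Rightarrow> real \<Rightarrow> real^'n^'n) \<Rightarrow> bool" where
  "is_transition_matrix V Phi \<longleftrightarrow>
     (\<forall>s. Phi s s = mat 1) \<and>
     (\<forall>t s. ((\<lambda>u. Phi u s) has_vector_derivative (V t ** Phi t s)) (at t))"

definition nonuniform_bounded_growth ::
  "(real \<Rightarrow> real \<Rightarrow> real^'n^'n) \<Rightarrow> real \<Rightarrow> real \<Rightarrow> real \<Rightarrow> bool" where
  "nonuniform_bounded_growth Phi K0 a eta \<longleftrightarrow>
     (\<forall>t \<tau>. opnorm (Phi t \<tau>) \<le> K0 * exp (eta * \<bar>\<tau>\<bar>) * exp (a * \<bar>t - \<tau>\<bar>))"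

end

theory Submission
  imports Defs
begin

lemma mm_rdistrib: "((A::real^'n^'m) + B) ** C = A ** C + B ** C"
  by (simp add: matrix_matrix_mult_def vec_eq_iff sum.distrib distrib_right)

lemma mm_rminus: "((A::real^'n^'m) - B) ** C = A ** C - B ** C"
  by (simp add: matrix_matrix_mult_def vec_eq_iff sum_subtractf left_diff_distrib)

lemma mm_ldiff: "(C::real^'n^'m) ** (A - B) = C ** A - C ** B"
  by (simp add: matrix_matrix_mult_def vec_eq_iff sum_subtractf right_diff_distrib)

lemma mm_lneg: "(- (A::real^'n^'m)) ** C = - (A ** C)"
  by (simp add: matrix_matrix_mult_def vec_eq_iff sum_negf)

lemma mm_rneg: "(C::real^'n^'m) ** (- A) = - (C ** A)"
  by (simp add: matrix_matrix_mult_def vec_eq_iff sum_negf)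

lemma mv_neg: "(- (A::real^'n^'m)) *v x = - (A *v x)"
  by (simp add: matrix_vector_mult_def vec_eq_iff sum_negf)

lemma mv_diff: "((A::real^'n^'m) - B) *v x = A *v x - B *v x"
  by (simp add: matrix_vector_mult_def vec_eq_iff sum_subtractf left_diff_distrib)

lemma bb_mm: "bounded_bilinear ((**) :: real^'n^'m \<Rightarrow> real^'k^'n \<Rightarrow> real^'k^'m)"
proof -
  have "bilinear ((**) :: real^'n^'m \<Rightarrow> real^'k^'n \<Rightarrow> real^'k^'m)"
    unfolding bilinear_def
    by (auto intro!: linearI simp: matrix_add_ldistrib mm_rdistrib matrix_scalar_ac scalar_matrix_assoc)
  then show ?thesis by (simp add: bilinear_conv_bounded_bilinear)
qed

lemma bb_mv: "bounded_bilinear ((*v) :: real^'n^'m \<Rightarrow> real^'n \<Rightarrow> real^'m)"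
proof -
  have "bilinear ((*v) :: real^'n^'m \<Rightarrow> real^'n \<Rightarrow> real^'m)"
    unfolding bilinear_def
    by (auto intro!: linearI simp: matrix_vector_right_distrib matrix_vector_mult_add_rdistrib
        matrix_scaleR_vector_ac scaleR_matrix_vector_assoc)
  then show ?thesis by (simp add: bilinear_conv_bounded_bilinear)
qed

lemma opn_mv: "norm ((M::real^'n^'n) *v x) \<le> opnorm M * norm x"
  unfolding opnorm_def by (rule onorm[OF matrix_vector_mul_bounded_linear])

lemma opn_nonneg: "0 \<le> opnorm (M::real^'n^'n)"
  unfolding opnorm_def by (rule onorm_pos_le[OF matrix_vector_mul_bounded_linear])

lemma opn_le: "(\<And>x. norm ((M::real^'n^'n) *v x) \<le> b * norm x) \<Longrightarrow> opnorm M \<le> b"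
  unfolding opnorm_def by (rule onorm_le)

lemma opn_mult: "opnorm ((M::real^'n^'n) ** N) \<le> opnorm M * opnorm N"
proof (rule opn_le)
  fix x
  have "norm ((M ** N) *v x) = norm (M *v (N *v x))" by (simp add: matrix_vector_mul_assoc)
  also have "\<dots> \<le> opnorm M * norm (N *v x)" by (rule opn_mv)
  also have "\<dots> \<le> opnorm M * (opnorm N * norm x)"
    by (rule mult_left_mono[OF opn_mv opn_nonneg])
  finally show "norm ((M ** N) *v x) \<le> opnorm M * opnorm N * norm x" by simp
qed

lemma opn_add: "opnorm ((M::real^'n^'n) + N) \<le> opnorm M + opnorm N"
proof (rule opn_le)
  fix x
  have "norm ((M + N) *v x) \<le> norm (M *v x) + norm (N *v x)"
    by (simp add: matrix_vector_mult_add_rdistrib norm_triangle_ineq)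
  also have "\<dots> \<le> opnorm M * norm x + opnorm N * norm x" by (intro add_mono opn_mv)
  finally show "norm ((M + N) *v x) \<le> (opnorm M + opnorm N) * norm x" by (simp add: algebra_simps)
qed

lemma opn_neg: "opnorm (- (M::real^'n^'n)) = opnorm M"
  unfolding opnorm_def mv_neg by (rule onorm_neg)

lemma opn_id: "opnorm (mat 1 :: real^'n^'n) = 1"
proof -
  have "(*v) (mat 1 :: real^'n^'n) = (\<lambda>x. x)" by (rule ext) simp
  then show ?thesis unfolding opnorm_def by (simp add: onorm_id)
qed

lemma opn_le_norm: "opnorm (M::real^'n^'n) \<le> real CARD('n) * real CARD('n) * norm M"
  unfolding opnorm_def
proof (rule onorm_le_matrix_component)
  fix i j
  show "\<bar>M $ i $ j\<bar> \<le> norm M"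
  proof -
    have "\<bar>M $ i $ j\<bar> \<le> norm (M $ i)" by (rule component_le_norm_cart)
    also have "\<dots> \<le> norm M" by (rule Finite_Cartesian_Product.norm_nth_le)
    finally show ?thesis .
  qed
qed

lemma norm_le_opn: "norm (M::real^'n^'n) \<le> real CARD('n) * real CARD('n) * opnorm M"
proof -
  have "norm M \<le> (\<Sum>i\<in>(UNIV::'n set). norm (M $ i))" unfolding norm_vec_def
    by (rule L2_set_le_sum) simp
  also have "\<dots> \<le> (\<Sum>i\<in>(UNIV::'n set). \<Sum>j\<in>(UNIV::'n set). opnorm M)"
  proof (rule sum_mono)
    fix i
    have "norm (M $ i) \<le> (\<Sum>j\<in>UNIV. \<bar>M $ i $ j\<bar>)" by (rule norm_le_l1_cart)
    also have "\<dots> \<le> (\<Sum>j\<in>(UNIV::'n set). opnorm M)"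
      by (rule sum_mono) (simp add: opnorm_def matrix_component_le_onorm)
    finally show "norm (M $ i) \<le> (\<Sum>j\<in>(UNIV::'n set). opnorm M)" .
  qed
  finally show ?thesis by simp
qed

lemma opn_lipschitz: "\<bar>opnorm (M::real^'n^'n) - opnorm N\<bar> \<le> real CARD('n) * real CARD('n) * norm (M - N)"
proof -
  have "opnorm M \<le> opnorm N + opnorm (M - N)" using opn_add[of N "M - N"] by simp
  moreover have "opnorm N \<le> opnorm M + opnorm (N - M)" using opn_add[of M "N - M"] by simp
  moreover have "opnorm (N - M) = opnorm (M - N)" using opn_neg[of "M - N"] by simp
  moreover have "opnorm (M - N) \<le> real CARD('n) * real CARD('n) * norm (M - N)" by (rule opn_le_norm)
  ultimately show ?thesis by linarith
qed

lemma opn_continuous: "continuous_on S f \<Longrightarrow> continuous_on S (\<lambda>x. opnorm (f x :: real^'n^'n))"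
proof -
  have "(real CARD('n) * real CARD('n))-lipschitz_on UNIV (opnorm :: real^'n^'n \<Rightarrow> real)"
    by (rule lipschitz_onI) (auto simp: dist_norm opn_lipschitz)
  then have "continuous_on UNIV (opnorm :: real^'n^'n \<Rightarrow> real)"
    by (rule lipschitz_on_continuous_on)
  moreover assume "continuous_on S f"
  ultimately show ?thesis
    using continuous_on_compose2 by blast
qed


lemma bl_mv_left: "bounded_linear (\<lambda>M::real^'n^'m. M *v x)"
  by (rule bounded_bilinear.bounded_linear_left[OF bb_mv])

lemma uniq_fwd:
  fixes y :: "real \<Rightarrow> real^'n"
  assumes "s \<le> t" "0 \<le> L"
    and der: "\<And>x. s \<le> x \<Longrightarrow> x \<le> t \<Longrightarrow> (y has_vector_derivative y' x) (at x)"
    and bnd: "\<And>x. s \<le> x \<Longrightarrow> x \<le> t \<Longrightarrow> norm (y' x) \<le> L * norm (y x)"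
    and y0: "y s = 0"
  shows "y t = 0"
proof -
  define g where "g x = exp (- 2 * L * x) * (y x \<bullet> y x)" for x
  have "g t \<le> g s"
  proof (rule DERIV_nonpos_imp_nonincreasing[OF \<open>s \<le> t\<close>])
    fix x assume x: "s \<le> x" "x \<le> t"
    have d1: "((\<lambda>x. y x \<bullet> y x) has_real_derivative (y x \<bullet> y' x + y' x \<bullet> y x)) (at x)"
      unfolding has_real_derivative_iff_has_vector_derivative
      by (rule bounded_bilinear.has_vector_derivative[OF bounded_bilinear_inner der[OF x] der[OF x]])
    have "((\<lambda>x. exp (- 2 * L * x)) has_real_derivative exp (- 2 * L * x) * (- 2 * L)) (at x)"
      by (auto intro!: derivative_eq_intros)
    from DERIV_mult[OF this d1]
    have "(g has_real_derivative exp (- 2 * L * x) * (- 2 * L) * (y x \<bullet> y x) + exp (- 2 * L * x) * (y x \<bullet> y' x + y' x \<bullet> y x)) (at x)"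
      unfolding g_def by (simp add: ac_simps)
    moreover have "exp (- 2 * L * x) * (- 2 * L) * (y x \<bullet> y x) + exp (- 2 * L * x) * (y x \<bullet> y' x + y' x \<bullet> y x) \<le> 0"
    proof -
      have "y x \<bullet> y' x \<le> norm (y x) * norm (y' x)" by (rule norm_cauchy_schwarz)
      also have "\<dots> \<le> norm (y x) * (L * norm (y x))" by (rule mult_left_mono[OF bnd[OF x]]) simp
      finally have "y x \<bullet> y' x \<le> L * (y x \<bullet> y x)" by (simp add: power2_norm_eq_inner[symmetric] power2_eq_square ac_simps)
      then have "(- 2 * L) * (y x \<bullet> y x) + (y x \<bullet> y' x + y' x \<bullet> y x) \<le> 0" by (simp add: inner_commute)
      then have "exp (- 2 * L * x) * ((- 2 * L) * (y x \<bullet> y x) + (y x \<bullet> y' x + y' x \<bullet> y x)) \<le> 0"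
        by (simp add: mult_nonneg_nonpos)
      then show ?thesis by (simp add: algebra_simps)
    qed
    ultimately show "\<exists>d. (g has_real_derivative d) (at x) \<and> d \<le> 0" by blast
  qed
  then have "exp (- 2 * L * t) * (y t \<bullet> y t) \<le> 0" using y0 by (simp add: g_def)
  then have "y t \<bullet> y t \<le> 0" by (simp add: mult_le_0_iff)
  then show ?thesis using inner_ge_zero[of "y t"] by (simp add: order_antisym)
qed

lemma uniq_bwd:
  fixes y :: "real \<Rightarrow> real^'n"
  assumes "t \<le> s" "0 \<le> L"
    and der: "\<And>x. t \<le> x \<Longrightarrow> x \<le> s \<Longrightarrow> (y has_vector_derivative y' x) (at x)"
    and bnd: "\<And>x. t \<le> x \<Longrightarrow> x \<le> s \<Longrightarrow> norm (y' x) \<le> L * norm (y x)"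
    and y0: "y s = 0"
  shows "y t = 0"
proof -
  define g where "g x = exp (2 * L * x) * (y x \<bullet> y x)" for x
  have "g t \<le> g s"
  proof (rule DERIV_nonneg_imp_nondecreasing[OF \<open>t \<le> s\<close>])
    fix x assume x: "t \<le> x" "x \<le> s"
    have d1: "((\<lambda>x. y x \<bullet> y x) has_real_derivative (y x \<bullet> y' x + y' x \<bullet> y x)) (at x)"
      unfolding has_real_derivative_iff_has_vector_derivative
      by (rule bounded_bilinear.has_vector_derivative[OF bounded_bilinear_inner der[OF x] der[OF x]])
    have "((\<lambda>x. exp (2 * L * x)) has_real_derivative exp (2 * L * x) * (2 * L)) (at x)"
      by (auto intro!: derivative_eq_intros)
    from DERIV_mult[OF this d1]
    have "(g has_real_derivative exp (2 * L * x) * (2 * L) * (y x \<bullet> y x) + exp (2 * L * x) * (y x \<bullet> y' x + y' x \<bullet> y x)) (at x)"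
      unfolding g_def by (simp add: ac_simps)
    moreover have "exp (2 * L * x) * (2 * L) * (y x \<bullet> y x) + exp (2 * L * x) * (y x \<bullet> y' x + y' x \<bullet> y x) \<ge> 0"
    proof -
      have "- (y x \<bullet> y' x) \<le> norm (y x) * norm (y' x)"
        using norm_cauchy_schwarz[of "y x" "- y' x"] by simp
      also have "\<dots> \<le> norm (y x) * (L * norm (y x))" by (rule mult_left_mono[OF bnd[OF x]]) simp
      finally have "- (y x \<bullet> y' x) \<le> L * (y x \<bullet> y x)" by (simp add: power2_norm_eq_inner[symmetric] power2_eq_square ac_simps)
      then have "(2 * L) * (y x \<bullet> y x) + (y x \<bullet> y' x + y' x \<bullet> y x) \<ge> 0" by (simp add: inner_commute)
      then have "exp (2 * L * x) * ((2 * L) * (y x \<bullet> y x) + (y x \<bullet> y' x + y' x \<bullet> y x)) \<ge> 0"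
        by simp
      then show ?thesis by (simp add: algebra_simps)
    qed
    ultimately show "\<exists>d. (g has_real_derivative d) (at x) \<and> d \<ge> 0" by blast
  qed
  then have "exp (2 * L * t) * (y t \<bullet> y t) \<le> 0" using y0 by (simp add: g_def)
  then have "y t \<bullet> y t \<le> 0" by (simp add: mult_le_0_iff)
  then show ?thesis using inner_ge_zero[of "y t"] by (simp add: order_antisym)
qed

lemma uniq:
  fixes V :: "real \<Rightarrow> real^'n^'n" and y :: "real \<Rightarrow> real^'n"
  assumes cV: "continuous_on UNIV V"
    and der: "\<And>x. (y has_vector_derivative (V x *v y x)) (at x)"
    and y0: "y s = 0"
  shows "y t = 0"
proof -
  let ?I = "{min s t..max s t}"
  have "compact ((\<lambda>x. opnorm (V x)) ` ?I)"
    by (rule compact_continuous_image) (auto intro: opn_continuous continuous_on_subset[OF cV])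
  then obtain L where L: "L > 0" "\<And>x. x \<in> ?I \<Longrightarrow> norm (opnorm (V x)) \<le> L"
    using compact_imp_bounded bounded_pos by (metis imageI)
  have bnd: "norm (V x *v y x) \<le> L * norm (y x)" if "x \<in> ?I" for x
  proof -
    have "norm (V x *v y x) \<le> opnorm (V x) * norm (y x)" by (rule opn_mv)
    also have "\<dots> \<le> L * norm (y x)" using L(2)[OF that] by (intro mult_right_mono) auto
    finally show ?thesis .
  qed
  show ?thesis
  proof (cases "s \<le> t")
    case True
    show ?thesis
      by (rule uniq_fwd[OF True _ der _ y0, of L]) (use L True bnd in auto)
  next
    case False
    show ?thesis
      by (rule uniq_bwd[of t s L _ "\<lambda>x. V x *v y x"]) (use L False bnd der y0 in auto)
  qed
qed

lemma cocycle:
  fixes V :: "real \<Rightarrow> real^'n^'n"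
  assumes cV: "continuous_on UNIV V" and T: "is_transition_matrix V Phi"
  shows "Phi t r ** Phi r s = Phi t s"
proof -
  have d: "((\<lambda>u. Phi u s) has_vector_derivative (V t ** Phi t s)) (at t)" for t s
    using T unfolding is_transition_matrix_def by blast
  have I: "Phi s s = mat 1" for s using T unfolding is_transition_matrix_def by blast
  have dv: "((\<lambda>u. Phi u s *v w) has_vector_derivative (V t *v (Phi t s *v w))) (at t)" for t s w
    using bounded_linear.has_vector_derivative[OF bl_mv_left d[of s t], of w]
    by (simp add: matrix_vector_mul_assoc)
  show ?thesis
  proof (subst matrix_eq, intro allI)
    fix x
    define y where "y u = Phi u r *v (Phi r s *v x) - Phi u s *v x" for u
    have "y t = 0"
    proof (rule uniq[OF cV])
      fix u
      show "(y has_vector_derivative V u *v y u) (at u)"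
        unfolding y_def using has_vector_derivative_diff[OF dv dv]
        by (simp add: matrix_vector_mult_diff_distrib)
      show "y r = 0" by (simp add: y_def I matrix_vector_mul_assoc)
    qed
    then show "(Phi t r ** Phi r s) *v x = Phi t s *v x"
      by (simp add: y_def matrix_vector_mul_assoc)
  qed
qed


lemma norm_mm_le: "norm ((X::real^'n^'n) ** (Y::real^'n^'n)) \<le> real CARD('n) * real CARD('n) * real CARD('n) * real CARD('n) * norm X * opnorm Y"
proof -
  let ?N = "real CARD('n) * real CARD('n)"
  have "norm (X ** Y) \<le> ?N * opnorm (X ** Y)" by (rule norm_le_opn)
  also have "\<dots> \<le> ?N * (opnorm X * opnorm Y)" by (intro mult_left_mono opn_mult) simp
  also have "\<dots> \<le> ?N * ((?N * norm X) * opnorm Y)"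
    by (intro mult_left_mono mult_right_mono opn_le_norm opn_nonneg) simp
  finally show ?thesis by (simp add: ac_simps)
qed

lemma norm_mm_le2: "norm ((X::real^'n^'n) ** (Y::real^'n^'n)) \<le> real CARD('n) * real CARD('n) * real CARD('n) * real CARD('n) * opnorm X * norm Y"
proof -
  let ?N = "real CARD('n) * real CARD('n)"
  have "norm (X ** Y) \<le> ?N * opnorm (X ** Y)" by (rule norm_le_opn)
  also have "\<dots> \<le> ?N * (opnorm X * opnorm Y)" by (intro mult_left_mono opn_mult) simp
  also have "\<dots> \<le> ?N * (opnorm X * (?N * norm Y))"
    by (intro mult_left_mono opn_le_norm opn_nonneg) simp
  finally show ?thesis by (simp add: ac_simps)
qed

lemma vs_id: "(a::'a::real_vector) - b - c *\<^sub>R (- d) = - (b - a - c *\<^sub>R e) - c *\<^sub>R (e - d)"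
  by (simp add: algebra_simps)

lemma nt_aux: "norm (- (X::'a::real_normed_vector) - c *\<^sub>R Y) \<le> norm X + \<bar>c\<bar> * norm Y"
proof -
  have "norm (- X - c *\<^sub>R Y) \<le> norm (- X) + norm (c *\<^sub>R Y)" by (rule norm_triangle_ineq4)
  then show ?thesis by simp
qed

lemma fs_aux: "d \<noteq> 0 \<Longrightarrow> (A * n1 + \<bar>d\<bar> * (N * n2 * w)) / \<bar>d\<bar> = A * (n1 / \<bar>d\<bar>) + N * w * (n2::real)"
  by (simp add: add_divide_distrib)

lemma deriv2:
  fixes V :: "real \<Rightarrow> real^'n^'n"
  assumes cV: "continuous_on UNIV V" and T: "is_transition_matrix V Phi"
    and bound: "\<And>t s. opnorm (Phi t s) \<le> K0 * exp (e * \<bar>s\<bar>) * exp (a * \<bar>t - s\<bar>)"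
    and K0: "0 \<le> K0" and e: "0 \<le> e" and a: "0 \<le> a"
  shows "((\<lambda>s. Phi t s) has_vector_derivative - (Phi t r ** V r)) (at r)"
proof -
  define G where "G s = Phi t s" for s
  define E where "E s = Phi s r" for s
  define N where "N = real CARD('n) * real CARD('n) * real CARD('n) * real CARD('n)"
  define Bd where "Bd = K0 * exp (e * (\<bar>r\<bar> + 1)) * exp (a * (\<bar>t - r\<bar> + 1))"
  have N0: "0 \<le> N" by (simp add: N_def)
  have coc: "G s ** E s = G r" for s unfolding G_def E_def by (rule cocycle[OF cV T])
  have Er: "E r = mat 1" using T by (simp add: E_def is_transition_matrix_def)
  have dE: "(E has_vector_derivative V r) (at r)"
    using T unfolding is_transition_matrix_def E_def
    by (metis (no_types, lifting) ext matrix_mul_rid)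
  have ev1: "eventually (\<lambda>s::real. s \<noteq> r \<and> dist s r < 1) (at r)"
    by (auto simp: eventually_at intro!: exI[of _ 1])
  have Gb: "opnorm (G s) \<le> Bd" if "dist s r < 1" for s
  proof -
    have "\<bar>s\<bar> \<le> \<bar>r\<bar> + 1" "\<bar>t - s\<bar> \<le> \<bar>t - r\<bar> + 1" using that by (auto simp: dist_real_def)
    then have "exp (e * \<bar>s\<bar>) \<le> exp (e * (\<bar>r\<bar> + 1))" "exp (a * \<bar>t - s\<bar>) \<le> exp (a * (\<bar>t - r\<bar> + 1))"
      using e a by (auto intro: mult_left_mono)
    then have "K0 * exp (e * \<bar>s\<bar>) * exp (a * \<bar>t - s\<bar>) \<le> Bd"
      unfolding Bd_def using K0 by (intro mult_mono) auto
    then show ?thesis using bound[of t s] by (simp add: G_def)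
  qed
  have Econt: "(E \<longlongrightarrow> E r) (at r)"
    using has_vector_derivative_continuous[OF dE] by (simp add: continuous_at)
  have Gcont: "((\<lambda>s. G s - G r) \<longlongrightarrow> 0) (at r)"
  proof (rule Lim_null_comparison)
    show "eventually (\<lambda>s. norm (G s - G r) \<le> N * Bd * norm (E s - E r)) (at r)"
      using ev1
    proof (rule eventually_mono)
      fix s assume s: "s \<noteq> r \<and> dist s r < 1"
      have "G s - G r = - (G s ** (E s - E r))" by (simp add: mm_ldiff coc Er)
      then have "norm (G s - G r) = norm (G s ** (E s - E r))" by simp
      also have "\<dots> \<le> N * opnorm (G s) * norm (E s - E r)" unfolding N_def by (rule norm_mm_le2)
      also have "\<dots> \<le> N * Bd * norm (E s - E r)"
        using Gb[of s] s N0 by (intro mult_right_mono mult_left_mono) auto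
      finally show "norm (G s - G r) \<le> N * Bd * norm (E s - E r)" .
    qed
    have "((\<lambda>s. norm (E s - E r)) \<longlongrightarrow> 0) (at r)"
      using tendsto_norm_zero[OF Lim_null[THEN iffD1, OF Econt]] by simp
    then show "((\<lambda>s. N * Bd * norm (E s - E r)) \<longlongrightarrow> 0) (at r)"
      using tendsto_mult_left[of _ 0 _ "N * Bd"] by simp
  qed
  have dE': "((\<lambda>s. norm (E s - E r - (s - r) *\<^sub>R V r) / norm (s - r)) \<longlongrightarrow> 0) (at r)"
    using dE unfolding has_vector_derivative_def has_derivative_iff_norm by blast
  have "((\<lambda>s. norm (G s - G r - (s - r) *\<^sub>R (- (G r ** V r))) / norm (s - r)) \<longlongrightarrow> 0) (at r)"
  proof (rule Lim_null_comparison)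
    let ?g = "\<lambda>s. N * Bd * (norm (E s - E r - (s - r) *\<^sub>R V r) / norm (s - r)) + N * opnorm (V r) * norm (G s - G r)"
    show "eventually (\<lambda>s. norm (norm (G s - G r - (s - r) *\<^sub>R (- (G r ** V r))) / norm (s - r)) \<le> ?g s) (at r)"
      using ev1
    proof (rule eventually_mono)
      fix s assume s: "s \<noteq> r \<and> dist s r < 1"
      have h1: "G s ** (E s - E r - (s - r) *\<^sub>R V r) = G r - G s - (s - r) *\<^sub>R (G s ** V r)"
        by (simp add: mm_ldiff matrix_scalar_ac scalar_matrix_assoc coc Er)
      have h2: "(G s - G r) ** V r = G s ** V r - G r ** V r" by (rule mm_rminus)
      have id: "G s - G r - (s - r) *\<^sub>R (- (G r ** V r)) =
          - (G s ** (E s - E r - (s - r) *\<^sub>R V r)) - (s - r) *\<^sub>R ((G s - G r) ** V r)"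
        unfolding h1 h2 by (rule vs_id)
      have "norm (G s - G r - (s - r) *\<^sub>R (- (G r ** V r)))
          \<le> norm (G s ** (E s - E r - (s - r) *\<^sub>R V r)) + \<bar>s - r\<bar> * norm ((G s - G r) ** V r)"
        unfolding id by (rule nt_aux)
      also have "\<dots> \<le> N * Bd * norm (E s - E r - (s - r) *\<^sub>R V r) + \<bar>s - r\<bar> * (N * norm (G s - G r) * opnorm (V r))"
      proof (intro add_mono mult_left_mono)
        have "norm (G s ** (E s - E r - (s - r) *\<^sub>R V r)) \<le> N * opnorm (G s) * norm (E s - E r - (s - r) *\<^sub>R V r)"
          unfolding N_def by (rule norm_mm_le2)
        also have "\<dots> \<le> N * Bd * norm (E s - E r - (s - r) *\<^sub>R V r)"
          using Gb[of s] s N0 by (intro mult_right_mono mult_left_mono) auto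
        finally show "norm (G s ** (E s - E r - (s - r) *\<^sub>R V r)) \<le> N * Bd * norm (E s - E r - (s - r) *\<^sub>R V r)" .
        show "norm ((G s - G r) ** V r) \<le> N * norm (G s - G r) * opnorm (V r)"
          unfolding N_def by (rule norm_mm_le)
      qed simp
      finally have "norm (G s - G r - (s - r) *\<^sub>R (- (G r ** V r))) / norm (s - r) \<le>
          (N * Bd * norm (E s - E r - (s - r) *\<^sub>R V r) + \<bar>s - r\<bar> * (N * norm (G s - G r) * opnorm (V r))) / \<bar>s - r\<bar>"
        unfolding real_norm_def using s by (intro divide_right_mono) auto
      also have "\<dots> = ?g s" using s fs_aux[of "s - r" "N * Bd"] by simp
      finally show "norm (norm (G s - G r - (s - r) *\<^sub>R (- (G r ** V r))) / norm (s - r)) \<le> ?g s" by simp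
    qed
    have Gn: "((\<lambda>s. norm (G s - G r)) \<longlongrightarrow> 0) (at r)" using Gcont by (simp add: tendsto_norm_zero)
    show "(?g \<longlongrightarrow> 0) (at r)"
      using tendsto_add[OF tendsto_mult_left[OF dE', of "N*Bd"] tendsto_mult_left[OF Gn, of "N * opnorm (V r)"]]
      by simp
  qed
  then have "(G has_derivative (\<lambda>h. h *\<^sub>R (- (G r ** V r)))) (at r)"
    unfolding has_derivative_iff_norm using bounded_linear_scaleR_left[of "- (G r ** V r)"] by simp
  then show ?thesis unfolding has_vector_derivative_def G_def by simp
qed


lemma mvt_nonincr:
  fixes g :: "real \<Rightarrow> real"
  assumes "a < b" "continuous_on {a..b} g"
    and d: "\<And>x. a < x \<Longrightarrow> x < b \<Longrightarrow> (g has_real_derivative g' x) (at x)"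
    and n: "\<And>x. a < x \<Longrightarrow> x < b \<Longrightarrow> g' x \<le> 0"
  shows "g b \<le> g a"
proof -
  obtain l z where z: "a < z" "z < b" "(g has_real_derivative l) (at z)" "g b - g a = (b - a) * l"
    using MVT[OF assms(1,2)] d real_differentiable_def by blast
  have "l = g' z" using DERIV_unique[OF z(3) d[OF z(1,2)]] .
  then have "l \<le> 0" using n z by simp
  then have "(b - a) * l \<le> 0" using assms(1) by (simp add: mult_nonneg_nonpos)
  then show ?thesis using z(4) by simp
qed

lemma forward:
  fixes A P :: "real \<Rightarrow> real^'n^'n"
    and PhiA PhiT :: "real \<Rightarrow> real \<Rightarrow> real^'n^'n"
  assumes contA: "continuous_on UNIV A"
    and PhiA: "is_transition_matrix A PhiA"
    and PhiT: "is_transition_matrix (\<lambda>t. A t + P t) PhiT"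
    and K0: "K0 > 0" and a: "a > 0" and eps: "\<epsilon> > 0"
    and growth: "\<And>t \<tau>. opnorm (PhiA t \<tau>) \<le> K0 * exp (\<epsilon> * \<bar>\<tau>\<bar>) * exp (a * \<bar>t - \<tau>\<bar>)"
    and PP: "PP > 0"
    and Pbound: "\<And>t. opnorm (P t) \<le> PP * exp (- p * \<bar>t\<bar>)"
    and peps: "\<epsilon> \<le> p"
    and st: "s \<le> t"
  shows "opnorm (PhiT t s) \<le> K0 * exp ((a + K0 * PP) * (t - s) + \<epsilon> * \<bar>s\<bar>)"
proof -
  define C where "C = K0 * exp (\<epsilon> * \<bar>s\<bar>)"
  define c where "c = K0 * PP"
  have c0: "0 < c" using K0 PP by (simp add: c_def)
  have C0: "0 < C" using K0 by (simp add: C_def)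
  have dT: "((\<lambda>u. PhiT u r) has_vector_derivative ((A u + P u) ** PhiT u r)) (at u)" for u r
    using PhiT unfolding is_transition_matrix_def by blast
  have IT: "PhiT r r = mat 1" for r using PhiT unfolding is_transition_matrix_def by blast
  have IA: "PhiA r r = mat 1" for r using PhiA unfolding is_transition_matrix_def by blast
  have dA2: "((\<lambda>r. PhiA q r) has_vector_derivative - (PhiA q r ** A r)) (at r)" for q r
    by (rule deriv2[OF contA PhiA growth]) (use K0 eps a in auto)
  have cT: "continuous_on UNIV (\<lambda>r. PhiT r s)"
    by (rule continuous_at_imp_continuous_on) (use has_vector_derivative_continuous[OF dT] in blast)
  define u where "u r = exp (- a * (r - s)) * opnorm (PhiT r s)" for r
  have cu: "continuous_on UNIV u"
    unfolding u_def by (intro continuous_intros opn_continuous[OF cT])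
  define I where "I r = integral {s..r} u" for r
  have dI: "(I has_vector_derivative u r) (at r within {s..b})" if "r \<in> {s..b}" for r b
    unfolding I_def by (rule integral_has_vector_derivative[OF continuous_on_subset[OF cu] that]) auto
  have cI: "continuous_on {s..b} I" for b
    using continuous_on_eq_continuous_within has_vector_derivative_continuous[OF dI] by blast
  have dI': "(I has_real_derivative u r) (at r)" if "s < r" for r
    using dI[of r "r + 1"] that at_within_Icc_at[of s r "r + 1"]
    by (simp add: has_real_derivative_iff_has_vector_derivative)
  have I0: "I s = 0" by (simp add: I_def)
  have step1: "u \<tau> \<le> C + c * I \<tau>" if "s < \<tau>" for \<tau>
  proof -
    define k where "k = c * exp (a * (\<tau> - s))"
    have k0: "0 \<le> k" using c0 by (simp add: k_def)
    have diffb: "opnorm (PhiT \<tau> s - PhiA \<tau> s) \<le> k * I \<tau>"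
    proof (rule opn_le)
      fix x :: "real^'n"
      define f where "f r = (PhiA \<tau> r ** PhiT r s) *v x" for r
      define f' where "f' r = (PhiA \<tau> r ** (P r ** PhiT r s)) *v x" for r
      define \<phi> where "\<phi> r = norm x * k * I r" for r
      have df: "(f has_vector_derivative f' r) (at r)" for r
      proof -
        have "((\<lambda>r. PhiA \<tau> r ** PhiT r s) has_vector_derivative
            (PhiA \<tau> r ** ((A r + P r) ** PhiT r s) + (- (PhiA \<tau> r ** A r)) ** PhiT r s)) (at r)"
          by (rule bounded_bilinear.has_vector_derivative[OF bb_mm dA2 dT])
        moreover have "PhiA \<tau> r ** ((A r + P r) ** PhiT r s) + (- (PhiA \<tau> r ** A r)) ** PhiT r s
            = PhiA \<tau> r ** (P r ** PhiT r s)"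
          by (simp add: mm_rdistrib matrix_add_ldistrib mm_lneg matrix_mul_assoc)
        ultimately have "((\<lambda>r. PhiA \<tau> r ** PhiT r s) has_vector_derivative (PhiA \<tau> r ** (P r ** PhiT r s))) (at r)"
          by simp
        from bounded_linear.has_vector_derivative[OF bl_mv_left this, of x]
        show ?thesis unfolding f_def f'_def .
      qed
      have "norm (f \<tau> - f s) \<le> \<phi> \<tau> - \<phi> s"
      proof (rule differentiable_bound_general[OF that])
        show "continuous_on {s..\<tau>} f"
          by (rule continuous_at_imp_continuous_on) (use has_vector_derivative_continuous[OF df] in blast)
        show "continuous_on {s..\<tau>} \<phi>"
          unfolding \<phi>_def by (intro continuous_intros cI)
        show "(f has_vector_derivative f' r) (at r)" for r by (rule df)
        show "(\<phi> has_vector_derivative (norm x * k * u r)) (at r)" if "s < r" "r < \<tau>" for r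
          unfolding \<phi>_def has_real_derivative_iff_has_vector_derivative[symmetric]
          using DERIV_cmult[OF dI'[OF that(1)], of "norm x * k"] by simp
        show "norm (f' r) \<le> norm x * k * u r" if r: "s < r" "r < \<tau>" for r
        proof -
          have "norm (f' r) \<le> opnorm (PhiA \<tau> r ** (P r ** PhiT r s)) * norm x"
            unfolding f'_def by (rule opn_mv)
          also have "opnorm (PhiA \<tau> r ** (P r ** PhiT r s)) \<le> opnorm (PhiA \<tau> r) * (opnorm (P r) * opnorm (PhiT r s))"
            using opn_mult[of "PhiA \<tau> r" "P r ** PhiT r s"] opn_mult[of "P r" "PhiT r s"] opn_nonneg[of "PhiA \<tau> r"]
            by (meson mult_left_mono order_trans)
          also have "\<dots> \<le> (K0 * exp (\<epsilon> * \<bar>r\<bar>) * exp (a * \<bar>\<tau> - r\<bar>)) * ((PP * exp (- p * \<bar>r\<bar>)) * opnorm (PhiT r s))"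
            by (intro mult_mono growth Pbound opn_nonneg mult_nonneg_nonneg) (use K0 PP in auto)
          also have "\<dots> = c * (exp (\<epsilon> * \<bar>r\<bar>) * exp (- p * \<bar>r\<bar>)) * exp (a * (\<tau> - s)) * u r"
          proof -
            have "exp (a * \<bar>\<tau> - r\<bar>) = exp (a * (\<tau> - s)) * exp (- a * (r - s))"
              using r by (simp add: exp_add[symmetric] algebra_simps)
            then show ?thesis by (simp add: u_def c_def ac_simps)
          qed
          also have "\<dots> \<le> c * 1 * exp (a * (\<tau> - s)) * u r"
          proof -
            have "exp (\<epsilon> * \<bar>r\<bar>) * exp (- p * \<bar>r\<bar>) = exp ((\<epsilon> - p) * \<bar>r\<bar>)"
              by (simp add: exp_add[symmetric] algebra_simps)
            also have "\<dots> \<le> 1" using peps by (simp add: mult_nonpos_nonneg)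
            finally show ?thesis
              using c0 opn_nonneg[of "PhiT r s"] by (intro mult_right_mono mult_left_mono) (auto simp: u_def)
          qed
          finally show ?thesis using norm_ge_zero[of x] by (simp add: k_def ac_simps mult_right_mono)
        qed
      qed
      moreover have "f \<tau> = PhiT \<tau> s *v x" by (simp add: f_def IA)
      moreover have "f s = PhiA \<tau> s *v x" by (simp add: f_def IT)
      moreover have "\<phi> s = 0" by (simp add: \<phi>_def I0)
      ultimately show "norm ((PhiT \<tau> s - PhiA \<tau> s) *v x) \<le> k * I \<tau> * norm x"
        by (simp add: mv_diff \<phi>_def ac_simps I0)
    qed
    have "opnorm (PhiT \<tau> s) \<le> opnorm (PhiA \<tau> s) + opnorm (PhiT \<tau> s - PhiA \<tau> s)"
      using opn_add[of "PhiA \<tau> s" "PhiT \<tau> s - PhiA \<tau> s"] by simp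
    also have "\<dots> \<le> C * exp (a * (\<tau> - s)) + k * I \<tau>"
      using growth[of \<tau> s] diffb that by (simp add: C_def)
    finally have "exp (- a * (\<tau> - s)) * opnorm (PhiT \<tau> s) \<le> exp (- a * (\<tau> - s)) * (C * exp (a * (\<tau> - s)) + k * I \<tau>)"
      by (intro mult_left_mono) auto
    also have "\<dots> = C + c * I \<tau>"
      by (simp add: k_def algebra_simps exp_add[symmetric])
    finally show ?thesis by (simp add: u_def)
  qed
  show ?thesis
  proof (cases "s = t")
    case True
    then show ?thesis using growth[of s s] IT[of s] IA[of s] by simp
  next
    case False
    then have st': "s < t" using st by simp
    define g where "g r = exp (- c * (r - s)) * (c * I r + C)" for r
    have "g t \<le> g s"
    proof (rule mvt_nonincr[OF st'])
      show "continuous_on {s..t} g" unfolding g_def by (intro continuous_intros cI)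
      show "(g has_real_derivative (exp (- c * (r - s)) * (- c) * (c * I r + C) + exp (- c * (r - s)) * (c * u r))) (at r)"
        if "s < r" "r < t" for r
      proof -
        have e1: "((\<lambda>r. exp (- c * (r - s))) has_real_derivative exp (- c * (r - s)) * (- c)) (at r)"
          by (auto intro!: derivative_eq_intros)
        have e2: "((\<lambda>r. c * I r + C) has_real_derivative c * u r) (at r)"
          using dI'[OF that(1)] by (auto intro!: derivative_eq_intros)
        show ?thesis unfolding g_def using DERIV_mult[OF e1 e2] by (simp add: algebra_simps)
      qed
      show "exp (- c * (r - s)) * (- c) * (c * I r + C) + exp (- c * (r - s)) * (c * u r) \<le> 0"
        if "s < r" "r < t" for r
      proof -
        have "c * u r \<le> c * (C + c * I r)" using step1[OF that(1)] c0 by simp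
        then have "(- c) * (c * I r + C) + (c * u r) \<le> 0" by (simp add: algebra_simps)
        then have "exp (- c * (r - s)) * ((- c) * (c * I r + C) + (c * u r)) \<le> 0"
          by (simp add: mult_nonneg_nonpos)
        then show ?thesis by (simp add: algebra_simps)
      qed
    qed
    then have "exp (- c * (t - s)) * (c * I t + C) \<le> C" by (simp add: g_def I0)
    then have "exp (c * (t - s)) * (exp (- c * (t - s)) * (c * I t + C)) \<le> exp (c * (t - s)) * C"
      by (intro mult_left_mono) auto
    moreover have "exp (c * (t - s)) * (exp (- c * (t - s)) * (c * I t + C)) = c * I t + C"
      by (simp add: mult.assoc[symmetric] exp_minus_inverse)
    ultimately have "c * I t + C \<le> exp (c * (t - s)) * C" by linarith
    then have "c * I t + C \<le> C * exp (c * (t - s))" by (simp add: mult.commute)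
    then have "u t \<le> C * exp (c * (t - s))" using step1[OF st'] by simp
    then have "exp (a * (t - s)) * u t \<le> exp (a * (t - s)) * (C * exp (c * (t - s)))"
      by (intro mult_left_mono) auto
    moreover have "exp (a * (t - s)) * u t = opnorm (PhiT t s)"
      by (simp add: u_def exp_add[symmetric] algebra_simps)
    moreover have "exp (a * (t - s)) * (C * exp (c * (t - s))) = K0 * exp ((a + K0 * PP) * (t - s) + \<epsilon> * \<bar>s\<bar>)"
      by (simp add: C_def c_def exp_add[symmetric] algebra_simps)
    ultimately show ?thesis by simp
  qed
qed


lemma reflect_trans:
  fixes V :: "real \<Rightarrow> real^'n^'n"
  assumes T: "is_transition_matrix V Phi"
  shows "is_transition_matrix (\<lambda>t. - V (- t)) (\<lambda>t s. Phi (- t) (- s))"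
  unfolding is_transition_matrix_def
proof (intro conjI allI)
  fix s show "Phi (- s) (- s) = mat 1" using T unfolding is_transition_matrix_def by blast
next
  fix t s
  have d: "((\<lambda>u. Phi u (- s)) has_vector_derivative (V (- t) ** Phi (- t) (- s))) (at (- t))"
    using T unfolding is_transition_matrix_def by blast
  have m: "(uminus has_vector_derivative (-1)) (at t)"
    using has_vector_derivative_minus[OF has_vector_derivative_id] by simp
  from vector_diff_chain_at[OF m, of "\<lambda>u. Phi u (- s)"] d
  have "(((\<lambda>u. Phi u (- s)) \<circ> uminus) has_vector_derivative (-1) *\<^sub>R (V (- t) ** Phi (- t) (- s))) (at t)"
    by simp
  then show "((\<lambda>u. Phi (- u) (- s)) has_vector_derivative (- V (- t)) ** Phi (- t) (- s)) (at t)"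
    by (simp add: o_def mm_lneg)
qed

theorem mainTheorem1:
  fixes A P :: "real \<Rightarrow> real^'n^'n"
    and PhiA PhiT :: "real \<Rightarrow> real \<Rightarrow> real^'n^'n"
    and K0 a \<epsilon> PP p :: real
  assumes contA: "continuous_on UNIV A"
    and contP: "continuous_on UNIV P"
    and PhiA: "is_transition_matrix A PhiA"
    and PhiT: "is_transition_matrix (\<lambda>t. A t + P t) PhiT"
    and K0: "K0 > 0" and a: "a > 0" and eps: "\<epsilon> > 0"
    and growth: "nonuniform_bounded_growth PhiA K0 a \<epsilon>"
    and PP: "PP > 0" and p: "p > 0"
    and Pbound: "\<forall>t. opnorm (P t) \<le> PP * exp (- p * \<bar>t\<bar>)"
    and peps: "p > \<epsilon>"
  shows "\<forall>t1 t2. opnorm (PhiT t2 t1) \<le> K0 * exp ((a + K0 * PP) * \<bar>t2 - t1\<bar> + \<epsilon> * \<bar>t1\<bar>)"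
proof (intro allI)
  fix t1 t2 :: real
  have g: "\<And>t \<tau>. opnorm (PhiA t \<tau>) \<le> K0 * exp (\<epsilon> * \<bar>\<tau>\<bar>) * exp (a * \<bar>t - \<tau>\<bar>)"
    using growth unfolding nonuniform_bounded_growth_def by blast
  have pb: "\<And>t. opnorm (P t) \<le> PP * exp (- p * \<bar>t\<bar>)" using Pbound by blast
  show "opnorm (PhiT t2 t1) \<le> K0 * exp ((a + K0 * PP) * \<bar>t2 - t1\<bar> + \<epsilon> * \<bar>t1\<bar>)"
  proof (cases "t1 \<le> t2")
    case True
    then show ?thesis
      using forward[OF contA PhiA PhiT K0 a eps g PP pb _ True] peps by simp
  next
    case False
    have contA': "continuous_on UNIV (\<lambda>t. - A (- t))"
    proof -
      have "continuous_on UNIV (A \<circ> uminus)"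
        by (rule continuous_on_compose) (auto intro: continuous_intros continuous_on_subset[OF contA])
      then show ?thesis by (auto simp: o_def intro: continuous_intros)
    qed
    have PhiA': "is_transition_matrix (\<lambda>t. - A (- t)) (\<lambda>t s. PhiA (- t) (- s))"
      by (rule reflect_trans[OF PhiA])
    have PhiT': "is_transition_matrix (\<lambda>t. - A (- t) + - P (- t)) (\<lambda>t s. PhiT (- t) (- s))"
      using reflect_trans[OF PhiT] by (simp add: add.commute)
    have g': "opnorm (PhiA (- t) (- \<tau>)) \<le> K0 * exp (\<epsilon> * \<bar>\<tau>\<bar>) * exp (a * \<bar>t - \<tau>\<bar>)" for t \<tau>
      using g[of "- t" "- \<tau>"] by (simp add: abs_minus_commute)
    have pb': "opnorm (- P (- t)) \<le> PP * exp (- p * \<bar>t\<bar>)" for t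
      using pb[of "- t"] by (simp add: opn_neg)
    have le: "- t1 \<le> - t2" using False by simp
    have "opnorm (PhiT (- (- t2)) (- (- t1))) \<le> K0 * exp ((a + K0 * PP) * (- t2 - - t1) + \<epsilon> * \<bar>- t1\<bar>)"
      by (rule forward[OF contA' PhiA' PhiT' K0 a eps g' PP pb' _ le]) (use peps in simp)
    then show ?thesis using False by simp
  qed
qed

end
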